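(* Let $(T,h)$ be a monotonicity preserving transformation and let $c: I\times J\to\mathbb{R}$ be a cost function. Define a new cost function $c'(x',y') := \frac{c(T^{-1}(x',y'))}{h(T^{-1}(x',y'))}$ on $I'\times J'$. If $\Xi\subset I\times J$ is $c$-monotone, then $\Xi' := T(\Xi)$ is $c'$-monotone.
   Context: Let $I,J,I',J'$ be intervals in $\mathbb{R}$ and let $\mathcal{E}(X)$ denote the finite measures on a space $X$. Two finite measures $\alpha,\beta$ on $\mathbb{R}^2$ are called competitors if they have the same marginals $\alpha_0,\alpha_1$ and, for any disintegrations $(\alpha_x)_x$, $(\beta_x)_x$ with respect to the first marginal $\alpha_0$, for $\alpha_0$-a.e. $x$ one has $\int y\,\alpha_x(dy)=\int y\,\beta_x(dy)$. A set $\Xi\subset\mathbb{R}^2$ is $c$-monotone if for every finite measure $\alpha$ concentrated on $\Xi$ with finite support and every competitor $\beta$ of $\alpha$ one has $\int c\,d\alpha\le\int c\,d\beta$. A bijective map $\tau:\mathcal{E}(I\times J)\to\mathcal{E}(I'\times J')$ is competitor preserving if whenever $\alpha',\beta'$ are competitors concentrated on $I'\times J'$, then $\tau^{-1}(\alpha')$ and $\tau^{-1}(\beta')$ are also competitors. Given a bijective map $T:I\times J\to I'\times J'$ and $h:I\times J\to(0,\infty)$, the pair $(T,h)$ is called a monotonicity preserving transformation if the induced map $\tau$ defined by $\int g\,d\tau(\alpha)=\int (g\circ T)\,h\,d\alpha$ for all bounded continuous $g$ is competitor preserving. *)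

theory Defs
  imports "HOL-Probability.Probability"
begin

definition fin_measures :: "(real \<times> real) set \<Rightarrow> (real \<times> real) measure set" where
  "fin_measures X = {M. sets M = sets borel \<and> finite_measure M \<and> emeasure M (UNIV - X) = 0}"

definition marg0 :: "(real \<times> real) measure \<Rightarrow> real measure" where
  "marg0 M = distr M borel fst"

definition marg1 :: "(real \<times> real) measure \<Rightarrow> real measure" where
  "marg1 M = distr M borel snd"

definition disintegration :: "(real \<times> real) measure \<Rightarrow> (real \<Rightarrow> real measure) \<Rightarrow> bool" where
  "disintegration M K \<longleftrightarrow>
     K \<in> marg0 M \<rightarrow>\<^sub>M prob_algebra borel \<and>
     (\<forall>A \<in> sets borel. emeasure M A = (\<integral>\<^sup>+ x. emeasure (K x) (Pair x -` A) \<partial>marg0 M))"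

definition competitors :: "(real \<times> real) measure \<Rightarrow> (real \<times> real) measure \<Rightarrow> bool" where
  "competitors \<alpha> \<beta> \<longleftrightarrow>
     sets \<alpha> = sets borel \<and> sets \<beta> = sets borel \<and> finite_measure \<alpha> \<and> finite_measure \<beta> \<and>
     marg0 \<alpha> = marg0 \<beta> \<and> marg1 \<alpha> = marg1 \<beta> \<and>
     (\<forall>K\<alpha> K\<beta>. disintegration \<alpha> K\<alpha> \<longrightarrow> disintegration \<beta> K\<beta> \<longrightarrow>
        (AE x in marg0 \<alpha>. (\<integral>y. y \<partial>K\<alpha> x) = (\<integral>y. y \<partial>K\<beta> x)))"

text \<open>Integral of c against a finitely supported measure (sum over its atoms).\<close>
definition fs_integral :: "(real \<times> real) measure \<Rightarrow> (real \<times> real \<Rightarrow> real) \<Rightarrow> real" where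
  "fs_integral M c = (\<Sum>p \<in> {p. emeasure M {p} \<noteq> 0}. c p * measure M {p})"

definition c_monotone :: "(real \<times> real \<Rightarrow> real) \<Rightarrow> (real \<times> real) set \<Rightarrow> bool" where
  "c_monotone c \<Xi> \<longleftrightarrow>
     (\<forall>\<alpha> \<beta>. sets \<alpha> = sets borel \<and> finite_measure \<alpha> \<and>
        (\<exists>S. finite S \<and> S \<subseteq> \<Xi> \<and> emeasure \<alpha> (UNIV - S) = 0) \<and>
        competitors \<alpha> \<beta> \<longrightarrow> fs_integral \<alpha> c \<le> fs_integral \<beta> c)"

definition competitor_preserving ::
  "((real \<times> real) measure \<Rightarrow> (real \<times> real) measure) \<Rightarrow> (real \<times> real) set \<Rightarrow> (real \<times> real) set \<Rightarrow> bool" where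
  "competitor_preserving \<tau> X X' \<longleftrightarrow>
     bij_betw \<tau> (fin_measures X) (fin_measures X') \<and>
     (\<forall>\<alpha>' \<in> fin_measures X'. \<forall>\<beta>' \<in> fin_measures X'. competitors \<alpha>' \<beta>' \<longrightarrow>
        competitors (the_inv_into (fin_measures X) \<tau> \<alpha>') (the_inv_into (fin_measures X) \<tau> \<beta>'))"

definition monotonicity_preserving ::
  "real set \<Rightarrow> real set \<Rightarrow> real set \<Rightarrow> real set \<Rightarrow> (real \<times> real \<Rightarrow> real \<times> real) \<Rightarrow> (real \<times> real \<Rightarrow> real) \<Rightarrow> bool" where
  "monotonicity_preserving I J I' J' T h \<longleftrightarrow>
     bij_betw T (I \<times> J) (I' \<times> J') \<and> (\<forall>p \<in> I \<times> J. 0 < h p) \<and>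
     (\<exists>\<tau>. bij_betw \<tau> (fin_measures (I \<times> J)) (fin_measures (I' \<times> J')) \<and>
        (\<forall>\<alpha> \<in> fin_measures (I \<times> J). \<forall>g :: real \<times> real \<Rightarrow> real.
            continuous_on UNIV g \<and> bounded (range g) \<longrightarrow>
            (\<integral>p. g p \<partial>\<tau> \<alpha>) = (\<integral>p. g (T p) * h p \<partial>\<alpha>)) \<and>
        competitor_preserving \<tau> (I \<times> J) (I' \<times> J'))"

end

theory Submission
  imports Defs
begin

lemma space_borelM: "sets M = sets (borel::'a::topological_space measure) \<Longrightarrow> space M = UNIV"
  by (metis sets_eq_imp_space_eq space_borel)

lemma AE_in_S:
  fixes M :: "(real\<times>real) measure"
  assumes "sets M = sets borel" "finite S" "emeasure M (UNIV - S) = 0"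
  shows "AE x in M. x \<in> S"
proof -
  have "UNIV - S \<in> sets M" using assms by (simp add: borel_closed finite_imp_closed closed_Diff)
  then show ?thesis using assms AE_iff_measurable[of "UNIV - S" M "\<lambda>x. x \<in> S"]
    by (auto simp: space_borelM)
qed

lemma fs_int:
  fixes M :: "(real\<times>real) measure" and f :: "real\<times>real \<Rightarrow> real"
  assumes sM: "sets M = sets borel" and fin: "finite_measure M" and S: "finite S"
    and null: "emeasure M (UNIV - S) = 0" and f: "f \<in> borel_measurable borel"
  shows "integral\<^sup>L M f = (\<Sum>s\<in>S. f s * measure M {s})"
proof -
  interpret finite_measure M by fact
  have fM: "f \<in> borel_measurable M" using f unfolding measurable_cong_sets[OF sM refl] .
  have sing: "\<And>s. {s} \<in> sets M" using sM by simp
  have ii: "integrable M (\<lambda>x. f s * indicator {s} x)" for s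
  proof (rule integrable_mult_right)
    show "integrable M (indicator {s} :: _ \<Rightarrow> real)"
      by (rule integrable_real_indicator[OF sing]) (use emeasure_finite[of "{s}"] in \<open>simp add: less_top[symmetric]\<close>)
  qed
  have mS: "(\<lambda>x. \<Sum>s\<in>S. f s * indicator {s} x) \<in> borel_measurable M"
    by (rule borel_measurable_integrable) (rule Bochner_Integration.integrable_sum[OF ii])
  have "AE x in M. f x = (\<Sum>s\<in>S. f s * indicator {s} x)"
    using AE_in_S[OF sM S null]
  proof (rule AE_mp, intro AE_I2 impI)
    fix x assume x: "x \<in> S"
    have "(\<Sum>s\<in>S. f s * indicator {s} x) = (\<Sum>s\<in>S. if x = s then f x else 0)"
      by (rule sum.cong) (simp_all add: indicator_def)
    also have "\<dots> = f x" using x S by (simp add: sum.delta)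
    finally show "f x = (\<Sum>s\<in>S. f s * indicator {s} x)" by simp
  qed
  then have "integral\<^sup>L M f = integral\<^sup>L M (\<lambda>x. \<Sum>s\<in>S. f s * indicator {s} x)"
    by (rule integral_cong_AE[OF fM mS])
  also have "\<dots> = (\<Sum>s\<in>S. integral\<^sup>L M (\<lambda>x. f s * indicator {s} x))"
    by (rule Bochner_Integration.integral_sum[OF ii])
  also have "\<dots> = (\<Sum>s\<in>S. f s * measure M {s})"
  proof (rule sum.cong[OF refl])
    fix s
    have "integral\<^sup>L M (\<lambda>x. f s * indicator {s} x) = f s * integral\<^sup>L M (indicator {s})"
      by (rule integral_mult_right_zero)
    also have "\<dots> = f s * measure M {s}" by (simp add: space_borelM[OF sM])
    finally show "integral\<^sup>L M (\<lambda>x. f s * indicator {s} x) = f s * measure M {s}" .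
  qed
  finally show ?thesis .
qed

lemma fs_eq:
  fixes M :: "(real\<times>real) measure"
  assumes sM: "sets M = sets borel" and fin: "finite_measure M" and S: "finite S"
    and null: "emeasure M (UNIV - S) = 0"
  shows "fs_integral M c = (\<Sum>s\<in>S. c s * measure M {s})"
  unfolding fs_integral_def
proof (rule sum.mono_neutral_left[OF S])
  have "UNIV - S \<in> sets M" using assms by (simp add: borel_closed finite_imp_closed closed_Diff)
  then have "p \<notin> S \<Longrightarrow> emeasure M {p} = 0" for p
    using emeasure_mono[of "{p}" "UNIV - S" M] null by auto
  then show "{p. emeasure M {p} \<noteq> 0} \<subseteq> S" by blast
  show "\<forall>i\<in>S - {p. emeasure M {p} \<noteq> 0}. c i * measure M {i} = 0"
  proof
    fix i assume "i \<in> S - {p. emeasure M {p} \<noteq> 0}"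
    then have "emeasure M {i} = 0" by simp
    then show "c i * measure M {i} = 0" by (simp add: measure_def)
  qed
qed

lemma bounded_cont_plus1:
  fixes g :: "real\<times>real \<Rightarrow> real"
  assumes "continuous_on UNIV g" "bounded (range g)"
  shows "continuous_on UNIV (\<lambda>x. g x + 1) \<and> bounded (range (\<lambda>x. g x + 1))"
proof
  show "continuous_on UNIV (\<lambda>x. g x + 1)" using assms by (intro continuous_intros)
  from assms obtain B where "\<forall>x. \<bar>g x\<bar> \<le> B" by (auto simp: bounded_iff)
  then have "\<forall>x. norm (g x + 1) \<le> B + 1"
    by (metis (no_types, lifting) abs_triangle_ineq abs_one add_right_mono order_trans real_norm_def)
  then show "bounded (range (\<lambda>x. g x + 1))" unfolding bounded_iff by (intro exI[of _ "B+1"]) simp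
qed

lemma core:
  fixes T :: "real\<times>real \<Rightarrow> real\<times>real" and h :: "real\<times>real \<Rightarrow> real"
    and X X' :: "(real\<times>real) set" and \<tau> :: "(real\<times>real) measure \<Rightarrow> (real\<times>real) measure"
  assumes bT: "bij_betw T X X'" and hpos: "\<forall>p\<in>X. 0 < h p" and Xb: "X \<in> sets borel"
    and btau: "bij_betw \<tau> (fin_measures X) (fin_measures X')"
    and tint: "\<forall>\<alpha>\<in>fin_measures X. \<forall>g :: real \<times> real \<Rightarrow> real.
            continuous_on UNIV g \<and> bounded (range g) \<longrightarrow>
            (\<integral>p. g p \<partial>\<tau> \<alpha>) = (\<integral>p. g (T p) * h p \<partial>\<alpha>)"
    and mu': "\<mu>' \<in> fin_measures X'" and S': "finite S'" "S' \<subseteq> X'" and nS': "emeasure \<mu>' (UNIV - S') = 0"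
  shows "emeasure (the_inv_into (fin_measures X) \<tau> \<mu>') (UNIV - the_inv_into X T ` S') = 0 \<and>
    (\<forall>q\<in>S'. measure (the_inv_into (fin_measures X) \<tau> \<mu>') {the_inv_into X T q} * h (the_inv_into X T q)
       = measure \<mu>' {q})"
proof -
  define \<mu> where "\<mu> = the_inv_into (fin_measures X) \<tau> \<mu>'"
  define inv where "inv = the_inv_into X T"
  have muin: "\<mu> \<in> fin_measures X" unfolding \<mu>_def
    by (rule the_inv_into_into) (use btau mu' in \<open>auto simp: bij_betw_def\<close>)
  have tmu: "\<tau> \<mu> = \<mu>'" unfolding \<mu>_def
    by (rule f_the_inv_into_f_bij_betw[OF btau mu'])
  have smu: "sets \<mu> = sets borel" and fmu: "finite_measure \<mu>" and nmu: "emeasure \<mu> (UNIV - X) = 0"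
    using muin by (auto simp: fin_measures_def)
  have smu': "sets \<mu>' = sets borel" and fmu': "finite_measure \<mu>'"
    using mu' by (auto simp: fin_measures_def)
  have intg: "\<And>g. continuous_on UNIV g \<Longrightarrow> bounded (range g) \<Longrightarrow>
     (\<integral>p. g p \<partial>\<mu>') = (\<integral>p. g (T p) * h p \<partial>\<mu>)"
  proof -
    fix g :: "real\<times>real\<Rightarrow>real" assume g: "continuous_on UNIV g" "bounded (range g)"
    have "(\<integral>p. g p \<partial>\<tau> \<mu>) = (\<integral>p. g (T p) * h p \<partial>\<mu>)"
      using tint muin g by blast
    then show "(\<integral>p. g p \<partial>\<mu>') = (\<integral>p. g (T p) * h p \<partial>\<mu>)" unfolding tmu .
  qed
  have invS: "\<And>q. q \<in> X' \<Longrightarrow> inv q \<in> X \<and> T (inv q) = q"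
  proof -
    fix q assume q: "q \<in> X'"
    from bT have i: "inj_on T X" and e: "T ` X = X'" by (auto simp: bij_betw_def)
    show "inv q \<in> X \<and> T (inv q) = q"
      using the_inv_into_into[OF i, of q X] f_the_inv_into_f[OF i, of q] e q unfolding inv_def by auto
  qed
  have invT: "\<And>p. p \<in> X \<Longrightarrow> inv (T p) = p"
    unfolding inv_def using bT by (rule the_inv_into_f_f[OF bij_betw_imp_inj_on])
  have cont_meas: "\<And>g::real\<times>real\<Rightarrow>real. continuous_on UNIV g \<Longrightarrow> g \<in> borel_measurable borel"
    by (simp add: borel_measurable_continuous_onI)
  have int': "\<And>g. continuous_on UNIV g \<Longrightarrow> (\<integral>p. g p \<partial>\<mu>') = (\<Sum>s\<in>S'. g s * measure \<mu>' {s})"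
    by (rule fs_int[OF smu' fmu' S'(1) nS' cont_meas])
  define m' where "m' = (\<Sum>s\<in>S'. measure \<mu>' {s})"
  have m'_int: "(\<integral>p. 1 \<partial>\<mu>') = m'" using int'[of "\<lambda>_. 1"] by (simp add: m'_def)
  show ?thesis
  proof (cases "m' = 0")
    case True
    then have "measure \<mu>' UNIV = 0" using m'_int by (simp add: space_borelM[OF smu'])
    then have eUe0: "emeasure \<mu>' UNIV = 0"
      using fmu' by (simp add: finite_measure.emeasure_eq_measure)
    have e0: "emeasure \<mu>' A = 0" for A
    proof (cases "A \<in> sets \<mu>'")
      case True
      have "UNIV \<in> sets \<mu>'" using sets.top[of \<mu>'] space_borelM[OF smu'] by simp
      then have "emeasure \<mu>' A \<le> emeasure \<mu>' UNIV" by (intro emeasure_mono) auto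
      then show ?thesis using eUe0 by simp
    qed (simp add: emeasure_notin_sets)
    have nullb: "null_measure borel \<in> fin_measures X"
      by (auto simp: fin_measures_def intro!: finite_measureI)
    define \<nu> where "\<nu> = \<tau> (null_measure borel)"
    have nuin: "\<nu> \<in> fin_measures X'" unfolding \<nu>_def using btau nullb by (auto simp: bij_betw_def)
    have snu: "sets \<nu> = sets borel" and fnu: "finite_measure \<nu>" using nuin by (auto simp: fin_measures_def)
    have b1: "bounded (range (\<lambda>_::real\<times>real. 1::real))" by simp
    have "(\<integral>p. 1 \<partial>\<nu>) = (\<integral>p. 1 * h p \<partial>null_measure borel)"
      using tint[rule_format, OF nullb, of "\<lambda>_. 1"] b1 unfolding \<nu>_def by simp
    then have "measure \<nu> UNIV = 0" by (simp add: space_borelM[OF snu])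
    then have eUe1: "emeasure \<nu> UNIV = 0"
      using fnu by (simp add: finite_measure.emeasure_eq_measure)
    have e1: "emeasure \<nu> A = 0" for A
    proof (cases "A \<in> sets \<nu>")
      case True
      have "UNIV \<in> sets \<nu>" using sets.top[of \<nu>] space_borelM[OF snu] by simp
      then have "emeasure \<nu> A \<le> emeasure \<nu> UNIV" by (intro emeasure_mono) auto
      then show ?thesis using eUe1 by simp
    qed (simp add: emeasure_notin_sets)
    have "\<nu> = \<mu>'" by (rule measure_eqI) (auto simp: snu smu' e0 e1)
    then have "\<mu> = null_measure borel" unfolding \<mu>_def \<nu>_def
      using the_inv_into_f_f[of \<tau> "fin_measures X" "null_measure borel"] btau nullb
      by (simp add: bij_betw_def)
    then show ?thesis
      using e0 by (simp add: \<mu>_def[symmetric] inv_def[symmetric] measure_def)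
  next
    case False
    have sne: "S' \<noteq> {}" using False by (auto simp: m'_def)
    have b1: "bounded (range (\<lambda>_::real\<times>real. 1::real))" by simp
    have "(\<integral>p. 1 * h p \<partial>\<mu>) = m'" using intg[of "\<lambda>_. 1", OF continuous_on_const b1] m'_int by simp
    then have "(\<integral>p. h p \<partial>\<mu>) \<noteq> 0" using False by simp
    then have hint: "integrable \<mu> h" using not_integrable_integral_eq by blast
    have meas: "(\<lambda>p. g (T p) * h p) \<in> borel_measurable \<mu>"
      if g: "continuous_on UNIV g" "bounded (range g)" for g
    proof (rule ccontr)
      assume nm: "(\<lambda>p. g (T p) * h p) \<notin> borel_measurable \<mu>"
      have g1: "continuous_on UNIV (\<lambda>x. g x + 1)" "bounded (range (\<lambda>x. g x + 1))"
        using bounded_cont_plus1[OF g] by auto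
      have nm1: "(\<lambda>p. (g (T p) + 1) * h p) \<notin> borel_measurable \<mu>"
      proof
        assume "(\<lambda>p. (g (T p) + 1) * h p) \<in> borel_measurable \<mu>"
        then have "(\<lambda>p. (g (T p) + 1) * h p - h p) \<in> borel_measurable \<mu>"
          using hint by measurable
        then show False using nm by (simp add: algebra_simps)
      qed
      have "\<not> integrable \<mu> (\<lambda>p. g (T p) * h p)" using nm borel_measurable_integrable by blast
      then have "(\<integral>p. g p \<partial>\<mu>') = 0" using intg[OF g] not_integrable_integral_eq by simp
      moreover
      have "\<not> integrable \<mu> (\<lambda>p. (g (T p) + 1) * h p)" using nm1 borel_measurable_integrable by blast
      then have "(\<integral>p. g p + 1 \<partial>\<mu>') = 0" using intg[OF g1] not_integrable_integral_eq by simp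
      moreover have "(\<integral>p. g p + 1 \<partial>\<mu>') = (\<integral>p. g p \<partial>\<mu>') + m'"
        using int'[OF g(1)] int'[OF g1(1)] by (simp add: m'_def algebra_simps sum.distrib)
      ultimately show False using False by simp
    qed
    have integ: "integrable \<mu> (\<lambda>p. g (T p) * h p)"
      if g: "continuous_on UNIV g" "bounded (range g)" for g
    proof -
      from g(2) obtain B where B: "\<forall>x. norm (g x) \<le> B" by (auto simp: bounded_iff)
      show ?thesis
      proof (rule Bochner_Integration.integrable_bound[OF _ meas[OF g]])
        show "integrable \<mu> (\<lambda>p. B * h p)" using hint by simp
        show "AE x in \<mu>. norm (g (T x) * h x) \<le> norm (B * h x)"
        proof (rule AE_I2)
          fix x
          have "B \<ge> 0" using B norm_ge_zero order_trans by blast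
          then show "norm (g (T x) * h x) \<le> norm (B * h x)"
            using B[rule_format, of "T x"] by (simp add: abs_mult mult_right_mono[OF _ abs_ge_zero])
        qed
      qed
    qed
    have AEX: "AE x in \<mu>. x \<in> X"
    proof -
      have m: "UNIV - X \<in> sets \<mu>" using Xb smu by auto
      have e: "{x \<in> space \<mu>. \<not> x \<in> X} = UNIV - X" by (auto simp: space_borelM[OF smu])
      show ?thesis using AE_iff_measurable[OF m e] nmu by simp
    qed
    have bmeq: "borel_measurable \<mu> = borel_measurable borel" by (rule measurable_cong_sets[OF smu refl])
    have mbS: "(\<lambda>x. g (T x) * h x) \<in> borel_measurable borel"
      if "continuous_on UNIV g" "bounded (range g)" for g
      using meas[OF that] unfolding bmeq .
    define g0 where "g0 x = min 1 (infdist x S')" for x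
    have clS: "closed S'" using S' by (simp add: finite_imp_closed)
    have g0c: "continuous_on UNIV g0" unfolding g0_def by (intro continuous_intros)
    have g0b: "bounded (range g0)" unfolding bounded_iff
    proof (intro exI[of _ 1] ballI)
      fix y assume "y \<in> range g0"
      then obtain x where y: "y = g0 x" by auto
      have "0 \<le> infdist x S'" by (rule infdist_nonneg)
      then show "norm y \<le> 1" unfolding y g0_def by simp
    qed
    have "(\<integral>p. g0 p \<partial>\<mu>') = 0" using int'[OF g0c] by (simp add: g0_def infdist_zero)
    then have "(\<integral>p. g0 (T p) * h p \<partial>\<mu>) = 0" using intg[OF g0c g0b] by simp
    moreover have "AE x in \<mu>. 0 \<le> g0 (T x) * h x"
      using AEX by eventually_elim (use hpos in \<open>auto simp: g0_def infdist_nonneg\<close>)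
    ultimately have "AE x in \<mu>. g0 (T x) * h x = 0"
      using integral_nonneg_eq_0_iff_AE[OF integ[OF g0c g0b]] by simp
    then have AES: "AE x in \<mu>. x \<in> inv ` S'"
      using AEX
    proof eventually_elim
      case (elim x)
      then have "g0 (T x) = 0" using hpos by auto
      then have "infdist (T x) S' = 0" unfolding g0_def by (simp add: min_def split: if_splits)
      then have "T x \<in> S'" using in_closed_iff_infdist_zero[OF clS sne] by simp
      then have "inv (T x) \<in> inv ` S'" by (rule imageI)
      then show ?case using invT[OF elim(2)] by simp
    qed
    have finI: "finite (inv ` S')" using S' by simp
    have nI: "emeasure \<mu> (UNIV - inv ` S') = 0"
    proof -
      have m: "UNIV - inv ` S' \<in> sets \<mu>" using finI smu
        by (simp add: borel_closed finite_imp_closed closed_Diff)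
      have e: "{x \<in> space \<mu>. \<not> x \<in> inv ` S'} = UNIV - inv ` S'" by (auto simp: space_borelM[OF smu])
      show ?thesis using AE_iff_measurable[OF m e] AES by simp
    qed
    have pts: "measure \<mu> {inv q} * h (inv q) = measure \<mu>' {q}" if q: "q \<in> S'" for q
    proof -
      define \<delta> where "\<delta> = (if S' - {q} = {} then 1 else infdist q (S' - {q}))"
      have dpos: "\<delta> > 0" unfolding \<delta>_def
        using infdist_pos_not_in_closed[of "S' - {q}" q] S' by (auto simp: finite_imp_closed)
      have dle: "\<And>r. r \<in> S' \<Longrightarrow> r \<noteq> q \<Longrightarrow> \<delta> \<le> dist r q"
        unfolding \<delta>_def by (auto simp: infdist_le dist_commute)
      define gq where "gq x = max 0 (1 - dist x q / \<delta>)" for x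
      have gqc: "continuous_on UNIV gq" unfolding gq_def by (intro continuous_intros) (use dpos in auto)
      have gqb: "bounded (range gq)" unfolding bounded_iff
      proof (intro exI[of _ 1] ballI)
        fix y assume "y \<in> range gq"
        then obtain x where "y = gq x" by auto
        moreover have "dist x q / \<delta> \<ge> 0" using dpos by simp
        ultimately show "norm y \<le> 1" unfolding gq_def by auto
      qed
      have gq0: "gq r = 0" if "r \<in> S'" "r \<noteq> q" for r
      proof -
        have "dist r q / \<delta> \<ge> 1" using dle[OF that] dpos by simp
        then show ?thesis unfolding gq_def by simp
      qed
      have gq1: "gq q = 1" unfolding gq_def by simp
      have "(\<integral>p. gq p \<partial>\<mu>') = (\<Sum>s\<in>S'. gq s * measure \<mu>' {s})" using int'[OF gqc] .
      also have "\<dots> = gq q * measure \<mu>' {q} + (\<Sum>s\<in>S' - {q}. gq s * measure \<mu>' {s})"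
        using S' q by (simp add: sum.remove)
      also have "\<dots> = measure \<mu>' {q}" using gq0 gq1 by simp
      finally have L: "(\<integral>p. gq p \<partial>\<mu>') = measure \<mu>' {q}" .
      have "(\<integral>p. gq (T p) * h p \<partial>\<mu>) = (\<Sum>s\<in>inv ` S'. gq (T s) * h s * measure \<mu> {s})"
        using fs_int[OF smu fmu finI nI mbS[OF gqc gqb]] by simp
      also have "\<dots> = gq (T (inv q)) * h (inv q) * measure \<mu> {inv q} +
          (\<Sum>s\<in>inv ` S' - {inv q}. gq (T s) * h s * measure \<mu> {s})"
        using sum.remove[OF finI imageI[OF q], of "\<lambda>s. gq (T s) * h s * measure \<mu> {s}"] by simp
      also have "(\<Sum>s\<in>inv ` S' - {inv q}. gq (T s) * h s * measure \<mu> {s}) = 0"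
      proof (rule sum.neutral, rule ballI)
        fix s assume "s \<in> inv ` S' - {inv q}"
        then obtain r where r: "r \<in> S'" "s = inv r" "s \<noteq> inv q" by auto
        then have "r \<noteq> q" by auto
        moreover have "T s = r" using r(1,2) invS[of r] S'(2) by blast
        ultimately show "gq (T s) * h s * measure \<mu> {s} = 0" using gq0 r by simp
      qed
      finally have R0: "(\<integral>p. gq (T p) * h p \<partial>\<mu>) = gq (T (inv q)) * h (inv q) * measure \<mu> {inv q}"
        by simp
      have "T (inv q) = q" using invS[of q] q S'(2) by blast
      then have R: "(\<integral>p. gq (T p) * h p \<partial>\<mu>) = h (inv q) * measure \<mu> {inv q}"
        using R0 gq1 by simp
      show ?thesis using L R intg[OF gqc gqb] by (simp add: mult.commute)
    qed
    show ?thesis using nI pts by (simp add: \<mu>_def inv_def)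
  qed
qed

lemma fs_transfer:
  fixes \<mu> \<mu>' :: "(real\<times>real) measure" and inv :: "real\<times>real \<Rightarrow> real\<times>real"
  assumes s: "sets \<mu> = sets borel" "finite_measure \<mu>" "sets \<mu>' = sets borel" "finite_measure \<mu>'"
    and S': "finite S'" and inj: "inj_on inv S'"
    and n: "emeasure \<mu> (UNIV - inv ` S') = 0" "emeasure \<mu>' (UNIV - S') = 0"
    and pts: "\<forall>q\<in>S'. measure \<mu> {inv q} * h (inv q) = measure \<mu>' {q}"
    and hpos: "\<forall>q\<in>S'. 0 < h (inv q)"
  shows "fs_integral \<mu> c = fs_integral \<mu>' (\<lambda>p'. c (inv p') / h (inv p'))"
proof -
  have "fs_integral \<mu> c = (\<Sum>s\<in>inv ` S'. c s * measure \<mu> {s})"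
    using fs_eq[OF s(1,2) _ n(1)] S' by simp
  also have "\<dots> = (\<Sum>q\<in>S'. c (inv q) * measure \<mu> {inv q})"
    using sum.reindex[OF inj, of "\<lambda>s. c s * measure \<mu> {s}"] by simp
  also have "\<dots> = (\<Sum>q\<in>S'. c (inv q) / h (inv q) * measure \<mu>' {q})"
  proof (rule sum.cong[OF refl])
    fix q assume q: "q \<in> S'"
    have "h (inv q) \<noteq> 0" using hpos q by force
    then show "c (inv q) * measure \<mu> {inv q} = c (inv q) / h (inv q) * measure \<mu>' {q}"
      using pts q by (simp add: field_simps)
  qed
  also have "\<dots> = fs_integral \<mu>' (\<lambda>p'. c (inv p') / h (inv p'))"
    using fs_eq[OF s(3,4) S' n(2)] by simp
  finally show ?thesis .
qed

theorem proposition4p9: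
  fixes I J I' J' :: "real set" and T :: "real \<times> real \<Rightarrow> real \<times> real"
    and h c :: "real \<times> real \<Rightarrow> real" and \<Xi> :: "(real \<times> real) set"
  assumes "is_interval I" "is_interval J" "is_interval I'" "is_interval J'"
    and "monotonicity_preserving I J I' J' T h"
    and "\<Xi> \<subseteq> I \<times> J"
    and "c_monotone c \<Xi>"
  shows "c_monotone
           (\<lambda>p'. c (the_inv_into (I \<times> J) T p') / h (the_inv_into (I \<times> J) T p'))
           (T ` \<Xi>)"
proof -
  define X where "X = I \<times> J"
  define X' where "X' = I' \<times> J'"
  define inv where "inv = the_inv_into X T"
  have bT: "bij_betw T X X'" and hpos: "\<forall>p\<in>X. 0 < h p"
    using assms(5) unfolding monotonicity_preserving_def X_def X'_def by auto
  obtain \<tau> where btau: "bij_betw \<tau> (fin_measures X) (fin_measures X')"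
    and tint: "\<forall>\<alpha>\<in>fin_measures X. \<forall>g :: real \<times> real \<Rightarrow> real.
            continuous_on UNIV g \<and> bounded (range g) \<longrightarrow>
            (\<integral>p. g p \<partial>\<tau> \<alpha>) = (\<integral>p. g (T p) * h p \<partial>\<alpha>)"
    and cp: "competitor_preserving \<tau> X X'"
    using assms(5) unfolding monotonicity_preserving_def X_def X'_def by blast
  have Xb: "X \<in> sets borel" unfolding X_def
    by (intro borel_Times real_interval_borel_measurable assms)
  have X'b: "X' \<in> sets borel" unfolding X'_def
    by (intro borel_Times real_interval_borel_measurable assms)
  have XIX: "\<Xi> \<subseteq> X" using assms(6) by (simp add: X_def)
  have binv: "bij_betw inv X' X" unfolding inv_def by (rule bij_betw_the_inv_into[OF bT])
  have invT: "\<And>p. p \<in> X \<Longrightarrow> inv (T p) = p"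
    unfolding inv_def using bT by (rule the_inv_into_f_f[OF bij_betw_imp_inj_on])
  have TX: "T ` \<Xi> \<subseteq> X'" using bT XIX by (auto simp: bij_betw_def)
  have cm: "c_monotone c \<Xi>" by fact
  show ?thesis
    unfolding c_monotone_def X_def[symmetric] inv_def[symmetric]
  proof (intro allI impI, elim conjE exE)
    fix \<alpha>' \<beta>' S'
    assume sa: "sets \<alpha>' = sets borel" and fa: "finite_measure \<alpha>'" and S': "finite S'"
      and S'X: "S' \<subseteq> T ` \<Xi>" and na: "emeasure \<alpha>' (UNIV - S') = 0"
      and comp: "competitors \<alpha>' \<beta>'"
    have sb: "sets \<beta>' = sets borel" and fb: "finite_measure \<beta>'"
      and m0: "marg0 \<alpha>' = marg0 \<beta>'" and m1: "marg1 \<alpha>' = marg1 \<beta>'"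
      using comp by (auto simp: competitors_def)
    have S'X': "S' \<subseteq> X'" using S'X TX by auto
    have m_a: "UNIV - S' \<in> sets \<alpha>'" using sa S' by (simp add: borel_closed finite_imp_closed closed_Diff)
    have ainX': "\<alpha>' \<in> fin_measures X'"
    proof -
      have "emeasure \<alpha>' (UNIV - X') \<le> emeasure \<alpha>' (UNIV - S')"
        by (rule emeasure_mono) (use S'X' m_a in auto)
      then show ?thesis using sa fa na by (simp add: fin_measures_def)
    qed
    define F where "F = fst ` S' \<times> snd ` S'"
    have F: "finite F" using S' by (simp add: F_def)
    have FX': "F \<subseteq> X'" using S'X' by (auto simp: F_def X'_def)
    have pre_fst: "emeasure \<beta>' (fst -` (UNIV - fst ` S')) = 0"
    proof -
      have A: "UNIV - fst ` S' \<in> sets borel" using S' by (simp add: borel_closed finite_imp_closed closed_Diff)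
      have fstm: "fst \<in> measurable \<beta>' borel" "fst \<in> measurable \<alpha>' borel"
        unfolding measurable_cong_sets[OF sb refl] measurable_cong_sets[OF sa refl]
        by (intro borel_measurable_continuous_onI continuous_intros)+
      have "emeasure \<beta>' (fst -` (UNIV - fst ` S')) = emeasure (marg0 \<beta>') (UNIV - fst ` S')"
        unfolding marg0_def using emeasure_distr[OF fstm(1) A] by (simp add: space_borelM[OF sb])
      also have "\<dots> = emeasure (marg0 \<alpha>') (UNIV - fst ` S')" using m0 by simp
      also have "\<dots> = emeasure \<alpha>' (fst -` (UNIV - fst ` S'))"
        unfolding marg0_def using emeasure_distr[OF fstm(2) A] by (simp add: space_borelM[OF sa])
      also have "\<dots> \<le> emeasure \<alpha>' (UNIV - S')"
        by (rule emeasure_mono) (use m_a in auto)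
      finally show ?thesis using na by simp
    qed
    have pre_snd: "emeasure \<beta>' (snd -` (UNIV - snd ` S')) = 0"
    proof -
      have A: "UNIV - snd ` S' \<in> sets borel" using S' by (simp add: borel_closed finite_imp_closed closed_Diff)
      have sndm: "snd \<in> measurable \<beta>' borel" "snd \<in> measurable \<alpha>' borel"
        unfolding measurable_cong_sets[OF sb refl] measurable_cong_sets[OF sa refl]
        by (intro borel_measurable_continuous_onI continuous_intros)+
      have "emeasure \<beta>' (snd -` (UNIV - snd ` S')) = emeasure (marg1 \<beta>') (UNIV - snd ` S')"
        unfolding marg1_def using emeasure_distr[OF sndm(1) A] by (simp add: space_borelM[OF sb])
      also have "\<dots> = emeasure (marg1 \<alpha>') (UNIV - snd ` S')" using m1 by simp
      also have "\<dots> = emeasure \<alpha>' (snd -` (UNIV - snd ` S'))"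
        unfolding marg1_def using emeasure_distr[OF sndm(2) A] by (simp add: space_borelM[OF sa])
      also have "\<dots> \<le> emeasure \<alpha>' (UNIV - S')"
        by (rule emeasure_mono) (use m_a in auto)
      finally show ?thesis using na by simp
    qed
    have nb: "emeasure \<beta>' (UNIV - F) = 0"
    proof -
      have fstb: "(fst::real\<times>real\<Rightarrow>real) \<in> borel_measurable borel"
        and sndb: "(snd::real\<times>real\<Rightarrow>real) \<in> borel_measurable borel"
        by (intro borel_measurable_continuous_onI continuous_intros)+
      have Af: "UNIV - fst ` S' \<in> sets borel" and As: "UNIV - snd ` S' \<in> sets borel"
        using S' by (simp_all add: borel_closed finite_imp_closed closed_Diff)
      have A1: "fst -` (UNIV - fst ` S') \<in> sets \<beta>'"
        using measurable_sets[OF fstb Af] sb by simp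
      have A2: "snd -` (UNIV - snd ` S') \<in> sets \<beta>'"
        using measurable_sets[OF sndb As] sb by simp
      have "emeasure \<beta>' (UNIV - F) \<le> emeasure \<beta>' (fst -` (UNIV - fst ` S') \<union> snd -` (UNIV - snd ` S'))"
        by (rule emeasure_mono) (use A1 A2 in \<open>auto simp: F_def\<close>)
      also have "\<dots> \<le> emeasure \<beta>' (fst -` (UNIV - fst ` S')) + emeasure \<beta>' (snd -` (UNIV - snd ` S'))"
        by (rule emeasure_subadditive[OF A1 A2])
      finally show ?thesis using pre_fst pre_snd by simp
    qed
    have binX': "\<beta>' \<in> fin_measures X'"
    proof -
      have mF: "UNIV - F \<in> sets \<beta>'" using sb F by (simp add: borel_closed finite_imp_closed closed_Diff)
      have "emeasure \<beta>' (UNIV - X') \<le> emeasure \<beta>' (UNIV - F)"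
        by (rule emeasure_mono) (use FX' mF in auto)
      then show ?thesis using sb fb nb by (simp add: fin_measures_def)
    qed
    define \<alpha> where "\<alpha> = the_inv_into (fin_measures X) \<tau> \<alpha>'"
    define \<beta> where "\<beta> = the_inv_into (fin_measures X) \<tau> \<beta>'"
    have compab: "competitors \<alpha> \<beta>"
      using cp ainX' binX' comp unfolding competitor_preserving_def \<alpha>_def \<beta>_def by blast
    have ca: "emeasure \<alpha> (UNIV - inv ` S') = 0 \<and> (\<forall>q\<in>S'. measure \<alpha> {inv q} * h (inv q) = measure \<alpha>' {q})"
      using core[OF bT hpos Xb btau tint ainX' S' S'X' na] unfolding \<alpha>_def inv_def .
    have cb: "emeasure \<beta> (UNIV - inv ` F) = 0 \<and> (\<forall>q\<in>F. measure \<beta> {inv q} * h (inv q) = measure \<beta>' {q})"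
      using core[OF bT hpos Xb btau tint binX' F FX' nb] unfolding \<beta>_def inv_def .
    have ainX: "\<alpha> \<in> fin_measures X" unfolding \<alpha>_def
      by (rule the_inv_into_into) (use btau ainX' in \<open>auto simp: bij_betw_def\<close>)
    have binX: "\<beta> \<in> fin_measures X" unfolding \<beta>_def
      by (rule the_inv_into_into) (use btau binX' in \<open>auto simp: bij_betw_def\<close>)
    have sa0: "sets \<alpha> = sets borel" "finite_measure \<alpha>" using ainX by (auto simp: fin_measures_def)
    have sb0: "sets \<beta> = sets borel" "finite_measure \<beta>" using binX by (auto simp: fin_measures_def)
    have invS'XI: "inv ` S' \<subseteq> \<Xi>"
    proof
      fix p assume "p \<in> inv ` S'"
      then obtain q where q: "q \<in> S'" "p = inv q" by auto
      then obtain \<xi> where xi: "\<xi> \<in> \<Xi>" "q = T \<xi>" using S'X by auto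
      then have "\<xi> \<in> X" using XIX by blast
      then have "inv q = \<xi>" using invT xi(2) by simp
      then show "p \<in> \<Xi>" using q(2) xi(1) by simp
    qed
    have ex: "\<exists>S. finite S \<and> S \<subseteq> \<Xi> \<and> emeasure \<alpha> (UNIV - S) = 0"
      using S' invS'XI conjunct1[OF ca] by blast
    have "fs_integral \<alpha> c \<le> fs_integral \<beta> c"
      using cm[unfolded c_monotone_def, rule_format, OF conjI[OF sa0(1) conjI[OF sa0(2) conjI[OF ex compab]]]] .
    moreover have invpos: "\<forall>q\<in>A. 0 < h (inv q)" if "A \<subseteq> X'" for A
    proof
      fix q assume "q \<in> A"
      then have "inv q \<in> X" using that bij_betw_apply[OF binv] by blast
      then show "0 < h (inv q)" using hpos by blast
    qed
    moreover have injA: "inj_on inv A" if "A \<subseteq> X'" for A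
      using inj_on_subset[OF bij_betw_imp_inj_on[OF binv] that] .
    have "fs_integral \<alpha> c = fs_integral \<alpha>' (\<lambda>p'. c (inv p') / h (inv p'))"
      by (rule fs_transfer[OF sa0 sa fa S' injA[OF S'X'] conjunct1[OF ca] na conjunct2[OF ca] invpos[OF S'X']])
    moreover have "fs_integral \<beta> c = fs_integral \<beta>' (\<lambda>p'. c (inv p') / h (inv p'))"
      by (rule fs_transfer[OF sb0 sb fb F injA[OF FX'] conjunct1[OF cb] nb conjunct2[OF cb] invpos[OF FX']])
    ultimately show "fs_integral \<alpha>' (\<lambda>p'. c (inv p') / h (inv p')) \<le> fs_integral \<beta>' (\<lambda>p'. c (inv p') / h (inv p'))"
      by simp
  qed
qed

end
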